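(* Every $2$-regular curve $\gamma: I\to\mathbb{E}^4$ admits a generalized Bishop frame of type C and a generalized Bishop frame of type D.
   Context: A regular curve $\gamma: I\to\mathbb{E}^4$ ($I$ an open interval) is considered with arc-length parametrization; $\mathbb{T}=\gamma'$ is its unit tangent vector. It is $2$-regular if $\mathbb{T}'$ is nowhere vanishing. A frame on $\gamma$ is an ordered orthonormal frame $(\mathbb{T},\mathbb{Z}_1,\mathbb{Z}_2,\mathbb{Z}_3)$ of smooth vector fields along $\gamma$ whose first vector is $\mathbb{T}$; it is identified with the smooth map $\mathbb{Z}: I\to O(4)$ whose rows are these vectors. Its coefficient matrix is the $\mathfrak{o}(4)$-valued function $X$ with $\mathbb{Z}'=X\mathbb{Z}$. A frame is of type C, resp. D, if, after possibly permuting $\mathbb{Z}_1,\mathbb{Z}_2,\mathbb{Z}_3$ (keeping $\mathbb{T}$ first), its coefficient matrix has the form, for some smooth functions $x_1,x_2,x_3$: Type C: $\begin{pmatrix}0&x_1&x_2&0\\-x_1&0&0&x_3\\-x_2&0&0&0\\0&-x_3&0&0\end{pmatrix}$; Type D: $\begin{pmatrix}0&x_1&0&0\\-x_1&0&x_2&x_3\\0&-x_2&0&0\\0&-x_3&0&0\end{pmatrix}$. *)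

theory Defs
  imports "HOL-Analysis.Analysis"
begin

definition smooth_on :: "real set \<Rightarrow> (real \<Rightarrow> 'a::real_normed_vector) \<Rightarrow> bool" where
  "smooth_on I f \<longleftrightarrow> (\<exists>D :: nat \<Rightarrow> real \<Rightarrow> 'a. D 0 = f \<and>
      (\<forall>n. \<forall>t\<in>I. (D n has_vector_derivative D (Suc n) t) (at t)))"

definition open_interval :: "real set \<Rightarrow> bool" where
  "open_interval I \<longleftrightarrow> is_interval I \<and> open I \<and> I \<noteq> {}"

definition tangent :: "(real \<Rightarrow> real^4) \<Rightarrow> real \<Rightarrow> real^4" where
  "tangent \<gamma> t = vector_derivative \<gamma> (at t)"

definition arclength_curve :: "real set \<Rightarrow> (real \<Rightarrow> real^4) \<Rightarrow> bool" where
  "arclength_curve I \<gamma> \<longleftrightarrow> open_interval I \<and> smooth_on I \<gamma> \<and>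
      (\<forall>t\<in>I. norm (tangent \<gamma> t) = 1)"

definition two_regular :: "real set \<Rightarrow> (real \<Rightarrow> real^4) \<Rightarrow> bool" where
  "two_regular I \<gamma> \<longleftrightarrow> arclength_curve I \<gamma> \<and>
      (\<forall>t\<in>I. vector_derivative (tangent \<gamma>) (at t) \<noteq> 0)"

definition frame_on :: "real set \<Rightarrow> (real \<Rightarrow> real^4) \<Rightarrow> (real \<Rightarrow> real^4^4) \<Rightarrow> bool" where
  "frame_on I \<gamma> Z \<longleftrightarrow> smooth_on I Z \<and>
      (\<forall>t\<in>I. orthogonal_matrix (Z t) \<and> Z t $ 1 = tangent \<gamma> t)"

definition coeff_matrix :: "real set \<Rightarrow> (real \<Rightarrow> real^4^4) \<Rightarrow> (real \<Rightarrow> real^4^4) \<Rightarrow> bool" where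
  "coeff_matrix I Z X \<longleftrightarrow> (\<forall>t\<in>I. (Z has_vector_derivative (X t ** Z t)) (at t))"

definition permute_frame :: "(4 \<Rightarrow> 4) \<Rightarrow> (real \<Rightarrow> real^4^4) \<Rightarrow> real \<Rightarrow> real^4^4" where
  "permute_frame p Z t = (\<chi> i. Z t $ p i)"

definition typeC_matrix :: "real \<Rightarrow> real \<Rightarrow> real \<Rightarrow> real^4^4" where
  "typeC_matrix x1 x2 x3 = vector [vector [0, x1, x2, 0], vector [-x1, 0, 0, x3],
                                   vector [-x2, 0, 0, 0], vector [0, -x3, 0, 0]]"

definition typeD_matrix :: "real \<Rightarrow> real \<Rightarrow> real \<Rightarrow> real^4^4" where
  "typeD_matrix x1 x2 x3 = vector [vector [0, x1, 0, 0], vector [-x1, 0, x2, x3],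
                                   vector [0, -x2, 0, 0], vector [0, -x3, 0, 0]]"

definition frame_of_type :: "(real \<Rightarrow> real \<Rightarrow> real \<Rightarrow> real^4^4) \<Rightarrow> real set \<Rightarrow>
    (real \<Rightarrow> real^4) \<Rightarrow> (real \<Rightarrow> real^4^4) \<Rightarrow> bool" where
  "frame_of_type M I \<gamma> Z \<longleftrightarrow> frame_on I \<gamma> Z \<and>
     (\<exists>p. p permutes (UNIV - {1}) \<and>
       (\<exists>x1 x2 x3 :: real \<Rightarrow> real. smooth_on I x1 \<and> smooth_on I x2 \<and> smooth_on I x3 \<and>
          coeff_matrix I (permute_frame p Z) (\<lambda>t. M (x1 t) (x2 t) (x3 t))))"

end

theory Submission
  imports Defs
begin

fun ck :: "nat \<Rightarrow> real set \<Rightarrow> (real \<Rightarrow> 'a::real_normed_vector) \<Rightarrow> bool" where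
  "ck 0 I f = True"
| "ck (Suc k) I f = (\<exists>f'. (\<forall>t\<in>I. (f has_vector_derivative f' t) (at t)) \<and> ck k I f')"

definition sm :: "real set \<Rightarrow> (real \<Rightarrow> 'a::real_normed_vector) \<Rightarrow> bool" where
  "sm I f \<longleftrightarrow> (\<forall>k. ck k I f)"

lemma ckI: "(\<forall>t\<in>I. (f has_vector_derivative f' t) (at t)) \<Longrightarrow> ck k I f' \<Longrightarrow> ck (Suc k) I f"
  by auto

lemma ck_mono: "ck (Suc k) I f \<Longrightarrow> ck k I f"
  by (induction k arbitrary: f) auto

lemma ck_cong:
  assumes "open I" "ck k I f" "\<And>t. t \<in> I \<Longrightarrow> f t = g t"
  shows "ck k I g"
proof (cases k)
  case 0 then show ?thesis by simp
next
  case (Suc m)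
  with assms obtain f' where d: "\<forall>t\<in>I. (f has_vector_derivative f' t) (at t)" and c: "ck m I f'"
    by auto
  have "\<forall>t\<in>I. (g has_vector_derivative f' t) (at t)"
    using d assms(1,3) by (metis has_vector_derivative_transform_within_open)
  with c Suc show ?thesis by auto
qed

lemma ck_const: "ck k I (\<lambda>t. c)"
proof (induction k arbitrary: c)
  case 0 then show ?case by simp
next
  case (Suc k)
  have "\<forall>t\<in>I. ((\<lambda>t. c) has_vector_derivative (\<lambda>t. 0) t) (at t)" by simp
  with Suc show ?case by (auto simp del: has_vector_derivative_const)
qed

lemma ck_add: "ck k I f \<Longrightarrow> ck k I g \<Longrightarrow> ck k I (\<lambda>t. f t + g t)"
proof (induction k arbitrary: f g)
  case 0 then show ?case by simp
next
  case (Suc k)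
  then obtain f' g' where "\<forall>t\<in>I. (f has_vector_derivative f' t) (at t)" "ck k I f'"
    "\<forall>t\<in>I. (g has_vector_derivative g' t) (at t)" "ck k I g'" by auto
  then show ?case using Suc.IH
    by (auto intro!: exI[of _ "\<lambda>t. f' t + g' t"] has_vector_derivative_add)
qed

lemma ck_bilinear:
  fixes prod :: "'a::real_normed_vector \<Rightarrow> 'b::real_normed_vector \<Rightarrow> 'c::real_normed_vector"
  assumes bb: "bounded_bilinear prod"
  shows "ck k I f \<Longrightarrow> ck k I g \<Longrightarrow> ck k I (\<lambda>t. prod (f t) (g t))"
proof (induction k arbitrary: f g)
  case 0 then show ?case by simp
next
  case (Suc k)
  then obtain f' g' where f': "\<forall>t\<in>I. (f has_vector_derivative f' t) (at t)" "ck k I f'"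
    and g': "\<forall>t\<in>I. (g has_vector_derivative g' t) (at t)" "ck k I g'" by auto
  have fk: "ck k I f" "ck k I g" using Suc.prems ck_mono by auto
  have "\<forall>t\<in>I. ((\<lambda>t. prod (f t) (g t)) has_vector_derivative (prod (f t) (g' t) + prod (f' t) (g t))) (at t)"
    using f' g' bounded_bilinear.has_vector_derivative[OF bb] by blast
  moreover have "ck k I (\<lambda>t. prod (f t) (g' t) + prod (f' t) (g t))"
    using Suc.IH fk f' g' by (intro ck_add) auto
  ultimately show ?case by (rule ckI)
qed

lemma ck_linear:
  fixes L :: "'a::real_normed_vector \<Rightarrow> 'b::real_normed_vector"
  assumes bl: "bounded_linear L"
  shows "ck k I f \<Longrightarrow> ck k I (\<lambda>t. L (f t))"
proof (induction k arbitrary: f)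
  case 0 then show ?case by simp
next
  case (Suc k)
  then obtain f' where f': "\<forall>t\<in>I. (f has_vector_derivative f' t) (at t)" "ck k I f'" by auto
  then show ?case using Suc.IH bounded_linear.has_vector_derivative[OF bl]
    by (auto intro!: exI[of _ "\<lambda>t. L (f' t)"])
qed

lemma ck_sum: "finite S \<Longrightarrow> (\<And>i. i \<in> S \<Longrightarrow> ck k I (f i)) \<Longrightarrow> ck k I (\<lambda>t. \<Sum>i\<in>S. f i t)"
  by (induction S rule: finite_induct) (auto intro: ck_add ck_const)

lemma ck_comp:
  fixes h g :: "real \<Rightarrow> real"
  assumes "open S"
  shows "ck k S h \<Longrightarrow> ck k I g \<Longrightarrow> (\<forall>t\<in>I. g t \<in> S) \<Longrightarrow> ck k I (\<lambda>t. h (g t))"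
proof (induction k arbitrary: h g)
  case 0 then show ?case by simp
next
  case (Suc k)
  then obtain h' g' where h': "\<forall>t\<in>S. (h has_vector_derivative h' t) (at t)" "ck k S h'"
    and g': "\<forall>t\<in>I. (g has_vector_derivative g' t) (at t)" "ck k I g'" by auto
  have gk: "ck k I g" using ck_mono[OF Suc.prems(2)] .
  have "\<forall>t\<in>I. ((\<lambda>t. h (g t)) has_vector_derivative (h' (g t) * g' t)) (at t)"
  proof
    fix t assume t: "t \<in> I"
    have "(h has_real_derivative h' (g t)) (at (g t))"
      using h' Suc.prems t by (simp add: has_real_derivative_iff_has_vector_derivative)
    moreover have "(g has_real_derivative g' t) (at t)"
      using g' t by (simp add: has_real_derivative_iff_has_vector_derivative)
    ultimately have "((\<lambda>t. h (g t)) has_real_derivative (h' (g t) * g' t)) (at t)"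
      by (rule DERIV_chain2)
    then show "((\<lambda>t. h (g t)) has_vector_derivative (h' (g t) * g' t)) (at t)"
      by (simp add: has_real_derivative_iff_has_vector_derivative)
  qed
  moreover have "ck k I (\<lambda>t. h' (g t) * g' t)"
    using Suc.IH[OF h'(2) gk] Suc.prems g'(2)
    by (intro ck_bilinear[OF bounded_bilinear_mult]) auto
  ultimately show ?case by (rule ckI)
qed

lemma sm_const: "sm I (\<lambda>t. c)" by (simp add: sm_def ck_const)
lemma sm_add: "sm I f \<Longrightarrow> sm I g \<Longrightarrow> sm I (\<lambda>t. f t + g t)" by (simp add: sm_def ck_add)
lemma sm_bilinear: "bounded_bilinear prod \<Longrightarrow> sm I f \<Longrightarrow> sm I g \<Longrightarrow> sm I (\<lambda>t. prod (f t) (g t))"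
  for prod :: "'a::real_normed_vector \<Rightarrow> 'b::real_normed_vector \<Rightarrow> 'c::real_normed_vector"
  by (simp add: sm_def ck_bilinear)
lemma sm_linear: "bounded_linear L \<Longrightarrow> sm I f \<Longrightarrow> sm I (\<lambda>t. L (f t))"
  for L :: "'a::real_normed_vector \<Rightarrow> 'b::real_normed_vector"
  by (simp add: sm_def ck_linear)
lemma sm_sum: "finite S \<Longrightarrow> (\<And>i. i \<in> S \<Longrightarrow> sm I (f i)) \<Longrightarrow> sm I (\<lambda>t. \<Sum>i\<in>S. f i t)"
  by (simp add: sm_def ck_sum)
lemma sm_comp: "open S \<Longrightarrow> sm S h \<Longrightarrow> sm I g \<Longrightarrow> (\<forall>t\<in>I. g t \<in> S) \<Longrightarrow> sm I (\<lambda>t. h (g t))"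
  for h g :: "real \<Rightarrow> real"
  by (simp add: sm_def ck_comp)

lemma sm_scaleR: "sm I f \<Longrightarrow> sm I g \<Longrightarrow> sm I (\<lambda>t. f t *\<^sub>R g t)"
  by (rule sm_bilinear[OF bounded_bilinear_scaleR])
lemma sm_mult: "sm I f \<Longrightarrow> sm I g \<Longrightarrow> sm I (\<lambda>t. f t * g t :: real)"
  by (rule sm_bilinear[OF bounded_bilinear_mult])
lemma sm_inner: "sm I f \<Longrightarrow> sm I g \<Longrightarrow> sm I (\<lambda>t. inner (f t) (g t) :: real)"
  by (rule sm_bilinear[OF bounded_bilinear_inner])
lemma sm_minus: "sm I f \<Longrightarrow> sm I (\<lambda>t. - f t)"
  using sm_linear[OF bounded_linear_minus[OF bounded_linear_ident]] by blast
lemma sm_diff: "sm I f \<Longrightarrow> sm I g \<Longrightarrow> sm I (\<lambda>t. f t - g t)"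
  using sm_add[of I f "\<lambda>t. - g t"] sm_minus by fastforce
lemma sm_nth: "sm I f \<Longrightarrow> sm I (\<lambda>t. f t $ i)"
  by (rule sm_linear[OF bounded_linear_vec_nth])

lemma ck_inverse: "ck k {0<..} (inverse :: real \<Rightarrow> real)"
proof (induction k)
  case 0 then show ?case by simp
next
  case (Suc k)
  have "\<forall>t\<in>{0<..}. ((inverse :: real \<Rightarrow> real) has_vector_derivative (- (inverse t * inverse t))) (at t)"
    by (auto simp: has_real_derivative_iff_has_vector_derivative[symmetric] intro!: derivative_eq_intros)
  moreover have "ck k {0<..} (\<lambda>t. - (inverse t * inverse t :: real))"
    using ck_linear[OF bounded_linear_minus[OF bounded_linear_ident]]
      ck_bilinear[OF bounded_bilinear_mult Suc.IH Suc.IH] by blast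
  ultimately show ?case by (rule ckI)
qed

lemma sm_inverse: "sm {0<..} (inverse :: real \<Rightarrow> real)"
  by (simp add: sm_def ck_inverse)

lemma ck_sqrt: "ck k {0<..} sqrt"
proof (induction k)
  case 0 then show ?case by simp
next
  case (Suc k)
  have "\<forall>t\<in>{0<..}. (sqrt has_vector_derivative (inverse (sqrt t) / 2)) (at t)"
    by (auto simp: has_real_derivative_iff_has_vector_derivative[symmetric] intro!: DERIV_real_sqrt)
  moreover have "ck k {0<..} (\<lambda>t. inverse (sqrt t) / 2)"
  proof -
    have "ck k {0<..} (\<lambda>t. inverse (sqrt t))"
      using ck_comp[OF open_greaterThan ck_inverse Suc.IH] by auto
    then show ?thesis
      using ck_linear[OF bounded_linear_divide[of 2]] by auto
  qed
  ultimately show ?case by (rule ckI)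
qed

lemma sm_sqrt: "sm {0<..} sqrt"
  by (simp add: sm_def ck_sqrt)

lemma sm_deriv:
  assumes "open I" "sm I f"
  shows "\<forall>t\<in>I. (f has_vector_derivative vector_derivative f (at t)) (at t)"
    and "sm I (\<lambda>t. vector_derivative f (at t))"
proof -
  from assms(2) have "ck (Suc 0) I f" by (simp add: sm_def)
  then obtain f0 where f0: "\<forall>t\<in>I. (f has_vector_derivative f0 t) (at t)" by auto
  show "\<forall>t\<in>I. (f has_vector_derivative vector_derivative f (at t)) (at t)"
  proof
    fix t assume "t \<in> I"
    then have "(f has_vector_derivative f0 t) (at t)" using f0 by blast
    then show "(f has_vector_derivative vector_derivative f (at t)) (at t)"
      by (simp add: vector_derivative_at)
  qed
  show "sm I (\<lambda>t. vector_derivative f (at t))"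
    unfolding sm_def
  proof
    fix k
    from assms(2) have "ck (Suc k) I f" by (simp add: sm_def)
    then obtain f' where f': "\<forall>t\<in>I. (f has_vector_derivative f' t) (at t)" and c: "ck k I f'"
      by auto
    have e: "f' t = vector_derivative f (at t)" if "t \<in> I" for t
      using f' that vector_derivative_at by (metis)
    show "ck k I (\<lambda>t. vector_derivative f (at t))"
      by (rule ck_cong[OF assms(1) c e])
  qed
qed

lemma smooth_on_iff:
  assumes "open I"
  shows "smooth_on I f \<longleftrightarrow> sm I f"
proof
  assume "smooth_on I f"
  then obtain D where D: "D 0 = f" "\<forall>n. \<forall>t\<in>I. (D n has_vector_derivative D (Suc n) t) (at t)"
    unfolding smooth_on_def by blast
  have ck_all: "ck k I (D n)" for k n
    by (induction k arbitrary: n) (use D in auto)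
  show "sm I f" unfolding sm_def using ck_all[of _ 0] D(1) by simp
next
  assume s: "sm I f"
  define D where "D n = ((\<lambda>g t. vector_derivative g (at t)) ^^ n) f" for n
  have Dsuc: "D (Suc n) = (\<lambda>t. vector_derivative (D n) (at t))" for n
    by (simp add: D_def)
  have sD: "sm I (D n)" for n
  proof (induction n)
    case 0 show ?case using s by (simp add: D_def)
  next
    case (Suc n) then show ?case unfolding Dsuc by (rule sm_deriv(2)[OF assms])
  qed
  have "D 0 = f" by (simp add: D_def)
  moreover have "\<forall>n. \<forall>t\<in>I. (D n has_vector_derivative D (Suc n) t) (at t)"
    unfolding Dsuc using sm_deriv(1)[OF assms sD] by blast
  ultimately show "smooth_on I f" unfolding smooth_on_def by (intro exI[of _ D] conjI)
qed

lemma interval_pts: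
  fixes I :: "real set"
  assumes "is_interval I" "open I" "x \<in> I" "y \<in> I"
  obtains a b where "a \<in> I" "b \<in> I" "a < min x y" "max x y < b" "{a..b} \<subseteq> I"
proof -
  have m1: "min x y \<in> I" and m2: "max x y \<in> I" using assms by (auto simp: min_def max_def)
  obtain e1 where e1: "e1 > 0" "ball (min x y) e1 \<subseteq> I" using assms(2) m1 open_contains_ball by blast
  obtain e2 where e2: "e2 > 0" "ball (max x y) e2 \<subseteq> I" using assms(2) m2 open_contains_ball by blast
  define a where "a = min x y - e1/2"
  define b where "b = max x y + e2/2"
  have "a \<in> ball (min x y) e1" using e1(1) by (simp add: a_def dist_real_def)
  then have a: "a \<in> I" using e1(2) by blast
  have "b \<in> ball (max x y) e2" using e2(1) by (simp add: b_def dist_real_def)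
  then have b: "b \<in> I" using e2(2) by blast
  have ab: "{a..b} \<subseteq> I"
  proof
    fix z assume z: "z \<in> {a..b}"
    then have "a \<le> z" "z \<le> b" by auto
    then show "z \<in> I" by (rule mem_is_interval_1_I[OF assms(1) a b])
  qed
  have "a < min x y" "max x y < b" using e1(1) e2(1) unfolding a_def b_def by (linarith, linarith)
  then show ?thesis using that[OF a b _ _ ab] by blast
qed

definition prim :: "real \<Rightarrow> (real \<Rightarrow> 'a::banach) \<Rightarrow> real \<Rightarrow> 'a" where
  "prim t0 g t = (if t0 \<le> t then integral {t0..t} g else - integral {t..t0} g)"

lemma prim_t0 [simp]: "prim t0 g t0 = 0"
  by (simp add: prim_def)

lemma prim_eq:
  fixes g :: "real \<Rightarrow> 'a::banach"
  assumes "a \<le> t0" "a \<le> t" "g integrable_on {a..max t t0}"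
  shows "prim t0 g t = integral {a..t} g - integral {a..t0} g"
proof (cases "t0 \<le> t")
  case True
  then have "integral {a..t0} g + integral {t0..t} g = integral {a..t} g"
    using assms by (intro Henstock_Kurzweil_Integration.integral_combine) (auto simp: max_def)
  then show ?thesis using True by (simp add: prim_def algebra_simps)
next
  case False
  then have "integral {a..t} g + integral {t..t0} g = integral {a..t0} g"
    using assms by (intro Henstock_Kurzweil_Integration.integral_combine) (auto simp: max_def)
  then show ?thesis using False by (simp add: prim_def algebra_simps)
qed

lemma prim_deriv:
  fixes g :: "real \<Rightarrow> 'a::banach"
  assumes I: "is_interval I" "open I" "t0 \<in> I" and cg: "continuous_on I g" and t: "t \<in> I"
  shows "(prim t0 g has_vector_derivative g t) (at t)"
proof -
  obtain a b where ab: "a \<in> I" "b \<in> I" "a < min t t0" "max t t0 < b" "{a..b} \<subseteq> I"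
    using interval_pts[OF I(1,2) t I(3)] by blast
  have cab: "continuous_on {a..b} g" using cg ab(5) continuous_on_subset by blast
  have "((\<lambda>u. integral {a..u} g) has_vector_derivative g t) (at t within {a..b})"
    using ab by (intro integral_has_vector_derivative[OF cab]) auto
  then have d: "((\<lambda>u. integral {a..u} g) has_vector_derivative g t) (at t)"
    using ab at_within_Icc_at[of a t b] by auto
  have d2: "((\<lambda>u. integral {a..u} g - integral {a..t0} g) has_vector_derivative g t) (at t)"
    using has_vector_derivative_diff[OF d has_vector_derivative_const[of "integral {a..t0} g"]] by simp
  show ?thesis
  proof (rule has_vector_derivative_transform_within_open[OF d2 open_greaterThanLessThan])
    show "t \<in> {a<..<b}" using ab by auto
    fix y assume y: "y \<in> {a<..<b}"
    have "g integrable_on {a..max y t0}"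
      using y ab by (intro integrable_continuous_real continuous_on_subset[OF cab]) auto
    then show "integral {a..y} g - integral {a..t0} g = prim t0 g y"
      using y ab by (subst prim_eq[of a]) auto
  qed
qed

lemma deriv_pow1: "((\<lambda>s. C * (s - t0) ^ Suc n / real (Suc n)) has_real_derivative C * (s - t0) ^ n) (at s within X)"
proof -
  have "((\<lambda>s. C * (s - t0) ^ Suc n / real (Suc n)) has_real_derivative C * ((1 + real n) * (1 * (s - t0) ^ n)) / real (Suc n)) (at s within X)"
    by (intro DERIV_cdivide DERIV_cmult DERIV_power_Suc derivative_eq_intros) auto
  moreover have "C * ((1 + real n) * (1 * (s - t0) ^ n)) / real (Suc n) = C * (s - t0) ^ n"
    by (simp add: of_nat_Suc)
  ultimately show ?thesis by simp
qed

lemma deriv_pow2: "((\<lambda>s. - C * (t0 - s) ^ Suc n / real (Suc n)) has_real_derivative C * (t0 - s) ^ n) (at s within X)"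
proof -
  have "((\<lambda>s. - C * (t0 - s) ^ Suc n / real (Suc n)) has_real_derivative - C * ((1 + real n) * ((-1) * (t0 - s) ^ n)) / real (Suc n)) (at s within X)"
    by (intro DERIV_cdivide DERIV_cmult DERIV_power_Suc derivative_eq_intros) auto
  moreover have "- C * ((1 + real n) * ((-1) * (t0 - s) ^ n)) / real (Suc n) = C * (t0 - s) ^ n"
    by (simp add: of_nat_Suc)
  ultimately show ?thesis by simp
qed

lemma prim_bound:
  fixes g :: "real \<Rightarrow> 'a::banach"
  assumes ab: "a \<le> t0" "t0 \<le> b" "t \<in> {a..b}" and cg: "continuous_on {a..b} g"
    and gb: "\<And>s. s \<in> {a..b} \<Longrightarrow> norm (g s) \<le> C * \<bar>s - t0\<bar> ^ n"
  shows "norm (prim t0 g t) \<le> C * \<bar>t - t0\<bar> ^ Suc n / real (Suc n)"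
proof (cases "t0 \<le> t")
  case True
  have hi: "((\<lambda>s. C * (s - t0) ^ n) has_integral
      (C * (t - t0) ^ Suc n / real (Suc n) - C * (t0 - t0) ^ Suc n / real (Suc n))) {t0..t}"
  proof (rule fundamental_theorem_of_calculus)
    show "t0 \<le> t" by fact
    fix s assume "s \<in> {t0..t}"
    have "((\<lambda>s. C * (s - t0) ^ Suc n / real (Suc n)) has_real_derivative C * (s - t0) ^ n) (at s within {t0..t})"
      by (rule deriv_pow1)
    then show "((\<lambda>s. C * (s - t0) ^ Suc n / real (Suc n)) has_vector_derivative C * (s - t0) ^ n) (at s within {t0..t})"
      by (simp add: has_real_derivative_iff_has_vector_derivative)
  qed
  have "norm (prim t0 g t) = norm (integral {t0..t} g)" using True by (simp add: prim_def)
  also have "\<dots> \<le> integral {t0..t} (\<lambda>s. C * (s - t0) ^ n)"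
  proof (rule integral_norm_bound_integral)
    show "g integrable_on {t0..t}"
      using ab True by (intro integrable_continuous_real continuous_on_subset[OF cg]) auto
    show "(\<lambda>s. C * (s - t0) ^ n) integrable_on {t0..t}" using hi by blast
    fix s assume "s \<in> {t0..t}"
    then show "norm (g s) \<le> C * (s - t0) ^ n" using gb[of s] ab by auto
  qed
  also have "\<dots> = C * (t - t0) ^ Suc n / real (Suc n)"
    using integral_unique[OF hi] by simp
  finally show ?thesis using True by simp
next
  case False
  have hi: "((\<lambda>s. C * (t0 - s) ^ n) has_integral
      ((- C * (t0 - t0) ^ Suc n / real (Suc n)) - (- C * (t0 - t) ^ Suc n / real (Suc n)))) {t..t0}"
  proof (rule fundamental_theorem_of_calculus)
    show "t \<le> t0" using False by simp
    fix s assume "s \<in> {t..t0}"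
    have "((\<lambda>s. - C * (t0 - s) ^ Suc n / real (Suc n)) has_real_derivative C * (t0 - s) ^ n) (at s within {t..t0})"
      by (rule deriv_pow2)
    then show "((\<lambda>s. - C * (t0 - s) ^ Suc n / real (Suc n)) has_vector_derivative C * (t0 - s) ^ n) (at s within {t..t0})"
      by (simp add: has_real_derivative_iff_has_vector_derivative)
  qed
  have "norm (prim t0 g t) = norm (integral {t..t0} g)" using False by (simp add: prim_def)
  also have "\<dots> \<le> integral {t..t0} (\<lambda>s. C * (t0 - s) ^ n)"
  proof (rule integral_norm_bound_integral)
    show "g integrable_on {t..t0}"
      using ab False by (intro integrable_continuous_real continuous_on_subset[OF cg]) auto
    show "(\<lambda>s. C * (t0 - s) ^ n) integrable_on {t..t0}" using hi by blast
    fix s assume "s \<in> {t..t0}"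
    then have "\<bar>s - t0\<bar> = t0 - s" by auto
    then show "norm (g s) \<le> C * (t0 - s) ^ n" using gb[of s] ab \<open>s \<in> {t..t0}\<close> by auto
  qed
  also have "\<dots> = C * (t0 - t) ^ Suc n / real (Suc n)"
    using integral_unique[OF hi] by simp
  finally show ?thesis using False by simp
qed

lemma bb_mv: "bounded_bilinear (\<lambda>(A::real^'n^'m) (v::real^'n). A *v v)"
proof -
  have "bilinear (\<lambda>(A::real^'n^'m) (v::real^'n). A *v v)"
    unfolding bilinear_def
  proof safe
    show "linear ((*v) A)" for A :: "real^'n^'m"
      by (simp add: matrix_vector_mul_linear)
    show "linear (\<lambda>A::real^'n^'m. A *v v)" for v :: "real^'n"
      by (rule linearI) (auto simp: vec_eq_iff matrix_vector_mult_def sum.distrib sum_distrib_left algebra_simps)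
  qed
  then show ?thesis by (simp add: bilinear_conv_bounded_bilinear)
qed

lemma has_vector_derivative_series:
  fixes f :: "nat \<Rightarrow> real \<Rightarrow> 'a::banach"
  assumes "convex S"
    and "\<And>n x. x \<in> S \<Longrightarrow> (f n has_vector_derivative f' n x) (at x within S)"
    and "uniform_limit S (\<lambda>n x. \<Sum>i<n. f' i x) g' sequentially"
    and "x0 \<in> S" "summable (\<lambda>n. f n x0)"
  shows "\<exists>g. \<forall>x\<in>S. (\<lambda>n. f n x) sums g x \<and> (g has_vector_derivative g' x) (at x within S)"
  unfolding has_vector_derivative_def
proof (rule has_derivative_series[where f' = "\<lambda>n x h. h *\<^sub>R f' n x"])
  show "convex S" by fact
  show "\<And>n x. x \<in> S \<Longrightarrow> (f n has_derivative (\<lambda>h. h *\<^sub>R f' n x)) (at x within S)"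
    using assms(2) by (simp add: has_vector_derivative_def)
  show "x0 \<in> S" by fact
  show "(\<lambda>n. f n x0) sums suminf (\<lambda>n. f n x0)" using assms(5) by (simp add: summable_sums)
  show "\<forall>\<^sub>F n in sequentially. \<forall>x\<in>S. \<forall>h. norm ((\<Sum>i<n. h *\<^sub>R f' i x) - h *\<^sub>R g' x) \<le> e * norm h"
    if "e > 0" for e
    unfolding eventually_sequentially
  proof -
    from that assms(3) obtain N where N: "\<And>n x. n \<ge> N \<Longrightarrow> x \<in> S \<Longrightarrow> norm ((\<Sum>i<n. f' i x) - g' x) < e"
      unfolding uniform_limit_iff eventually_at_top_linorder dist_norm by blast
    {
      fix n :: nat and x h :: real assume nx: "n \<ge> N" "x \<in> S"
      have "norm ((\<Sum>i<n. h *\<^sub>R f' i x) - h *\<^sub>R g' x) = \<bar>h\<bar> * norm ((\<Sum>i<n. f' i x) - g' x)"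
        by (simp add: scaleR_sum_right[symmetric] scaleR_diff_right[symmetric])
      also have "\<dots> \<le> \<bar>h\<bar> * e" using N[OF nx] by (intro mult_left_mono) auto
      finally have "norm ((\<Sum>i<n. h *\<^sub>R f' i x) - h *\<^sub>R g' x) \<le> e * norm h" by (simp add: mult.commute)
    }
    then show "\<exists>N. \<forall>n\<ge>N. \<forall>x\<in>S. \<forall>h. norm ((\<Sum>i<n. h *\<^sub>R f' i x) - h *\<^sub>R g' x) \<le> e * norm h"
      by blast
  qed
qed

primrec pic :: "(real \<Rightarrow> real^'n^'n) \<Rightarrow> real \<Rightarrow> real^'n \<Rightarrow> nat \<Rightarrow> real \<Rightarrow> real^'n" where
  "pic A t0 v0 0 = (\<lambda>t. v0)"
| "pic A t0 v0 (Suc n) = prim t0 (\<lambda>s. A s *v pic A t0 v0 n s)"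

lemma ode_exists:
  fixes A :: "real \<Rightarrow> real^'n^'n" and v0 :: "real^'n"
  assumes I: "is_interval I" "open I" "t0 \<in> I" and cA: "continuous_on I A"
  shows "\<exists>V. V t0 = v0 \<and> (\<forall>t\<in>I. (V has_vector_derivative A t *v V t) (at t))"
proof -
  define P where "P = pic A t0 v0"
  have P0: "P 0 = (\<lambda>t. v0)" and PS: "\<And>n. P (Suc n) = prim t0 (\<lambda>s. A s *v P n s)"
    by (simp_all add: P_def)
  have cP: "continuous_on I (P n)" for n
  proof (induction n)
    case 0 then show ?case by (simp add: P0)
  next
    case (Suc n)
    have cg: "continuous_on I (\<lambda>s. A s *v P n s)"
      using bounded_bilinear.continuous_on[OF bb_mv cA Suc] by simp
    have "\<forall>t\<in>I. isCont (P (Suc n)) t"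
      using prim_deriv[OF I cg] has_vector_derivative_continuous unfolding PS by blast
    then show ?case by (simp add: continuous_at_imp_continuous_on)
  qed
  have cg: "continuous_on I (\<lambda>s. A s *v P n s)" for n
    using bounded_bilinear.continuous_on[OF bb_mv cA cP] by simp
  have dP: "t \<in> I \<Longrightarrow> (P (Suc n) has_vector_derivative A t *v P n t) (at t)" for n t
    unfolding PS by (rule prim_deriv[OF I cg])
  define W where "W t = v0 + (\<Sum>n. P (Suc n) t)" for t
  have "W t0 = v0"
    by (simp add: W_def PS)
  moreover have "(W has_vector_derivative A t *v W t) (at t)" if t: "t \<in> I" for t
  proof -
    obtain a b where ab: "a \<in> I" "b \<in> I" "a < min t t0" "max t t0 < b" "{a..b} \<subseteq> I"
      using interval_pts[OF I(1,2) t I(3)] by blast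
    have "compact (A ` {a..b})"
      using ab(5) by (intro compact_continuous_image continuous_on_subset[OF cA]) auto
    then obtain MA where MA: "MA > 0" "\<And>s. s \<in> {a..b} \<Longrightarrow> norm (A s) \<le> MA"
      using compact_imp_bounded bounded_pos by (metis imageI)
    obtain Kb where Kb: "Kb > 0" "\<And>(M::real^'n^'n) v. norm (M *v v) \<le> norm M * norm v * Kb"
      using bounded_bilinear.pos_bounded[OF bb_mv] by blast
    define K where "K = MA * Kb"
    have K0: "K \<ge> 0" using MA Kb by (simp add: K_def)
    have AK: "norm (A s *v v) \<le> K * norm v" if "s \<in> {a..b}" for s v
    proof -
      have "norm (A s *v v) \<le> norm (A s) * norm v * Kb" by (rule Kb(2))
      also have "\<dots> \<le> MA * norm v * Kb"
        using MA(2)[OF that] Kb(1) by (intro mult_right_mono) auto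
      finally show ?thesis by (simp add: K_def algebra_simps)
    qed
    have cab: "continuous_on {a..b} (\<lambda>s. A s *v P n s)" for n
      using continuous_on_subset[OF cg ab(5)] .
    have bnd: "\<forall>s\<in>{a..b}. norm (P n s) \<le> norm v0 * K ^ n * \<bar>s - t0\<bar> ^ n / fact n" for n
    proof (induction n)
      case 0 then show ?case by (simp add: P0)
    next
      case (Suc n)
      show ?case
      proof
        fix s assume s: "s \<in> {a..b}"
        have "norm (P (Suc n) s) \<le> (K * (norm v0 * K ^ n / fact n)) * \<bar>s - t0\<bar> ^ Suc n / real (Suc n)"
          unfolding PS
        proof (rule prim_bound[OF _ _ s cab])
          show "a \<le> t0" "t0 \<le> b" using ab by auto
          fix r assume r: "r \<in> {a..b}"
          have "norm (A r *v P n r) \<le> K * norm (P n r)" by (rule AK[OF r])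
          also have "\<dots> \<le> K * (norm v0 * K ^ n * \<bar>r - t0\<bar> ^ n / fact n)"
            using Suc.IH r K0 by (intro mult_left_mono) auto
          finally show "norm (A r *v P n r) \<le> K * (norm v0 * K ^ n / fact n) * \<bar>r - t0\<bar> ^ n"
            by (simp add: algebra_simps)
        qed
        also have "\<dots> = norm v0 * K ^ Suc n * \<bar>s - t0\<bar> ^ Suc n / fact (Suc n)"
          by (simp add: field_simps)
        finally show "norm (P (Suc n) s) \<le> norm v0 * K ^ Suc n * \<bar>s - t0\<bar> ^ Suc n / fact (Suc n)" .
      qed
    qed
    define L where "L = b - a"
    define M where "M n = norm v0 * (K * L) ^ n / fact n" for n
    have PM: "norm (P n s) \<le> M n" if s: "s \<in> {a..b}" for n s
    proof -
      have "\<bar>s - t0\<bar> \<le> L" using s ab by (auto simp: L_def)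
      then have "\<bar>s - t0\<bar> ^ n \<le> L ^ n" by (intro power_mono) auto
      then have "norm v0 * K ^ n * \<bar>s - t0\<bar> ^ n / fact n \<le> norm v0 * K ^ n * L ^ n / fact n"
        using K0 by (intro divide_right_mono mult_left_mono) auto
      moreover have "norm (P n s) \<le> norm v0 * K ^ n * \<bar>s - t0\<bar> ^ n / fact n" using bnd[of n] s by blast
      moreover have "norm v0 * K ^ n * L ^ n / fact n = M n" by (simp add: M_def power_mult_distrib)
      ultimately show ?thesis by linarith
    qed
    have sM: "summable M"
    proof -
      have "summable (\<lambda>n. norm v0 * (inverse (fact n) * (K * L) ^ n))"
        by (intro summable_mult summable_exp)
      moreover have "M = (\<lambda>n. norm v0 * (inverse (fact n) * (K * L) ^ n))"
        by (rule ext) (simp add: M_def divide_inverse mult.commute mult.left_commute)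
      ultimately show ?thesis by simp
    qed
    have sKM: "summable (\<lambda>n. K * M n)" using sM by (rule summable_mult)
    define S where "S = {a<..<b}"
    have SS: "S \<subseteq> {a..b}" by (auto simp: S_def)
    have tS: "t \<in> S" using ab by (auto simp: S_def)
    define g' where "g' x = (\<Sum>i. A x *v P i x)" for x
    have ul: "uniform_limit S (\<lambda>n x. \<Sum>i<n. A x *v P i x) g' sequentially"
      unfolding g'_def
    proof (rule Weierstrass_m_test[OF _ sKM])
      fix n x assume "x \<in> S"
      then have x: "x \<in> {a..b}" using SS by blast
      have "norm (A x *v P n x) \<le> K * norm (P n x)" by (rule AK[OF x])
      also have "\<dots> \<le> K * M n" using PM[OF x] K0 by (intro mult_left_mono) auto
      finally show "norm (A x *v P n x) \<le> K * M n" .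
    qed
    have sumP: "summable (\<lambda>n. P n x)" if "x \<in> {a..b}" for x
      by (rule summable_comparison_test'[OF sM]) (rule PM[OF that])
    have sumP1: "summable (\<lambda>n. P (Suc n) x)" if "x \<in> {a..b}" for x
      by (subst summable_Suc_iff) (rule sumP[OF that])
    obtain g where g: "\<forall>x\<in>S. (\<lambda>n. P (Suc n) x) sums g x \<and> (g has_vector_derivative g' x) (at x within S)"
    proof -
      have "\<exists>g. \<forall>x\<in>S. (\<lambda>n. P (Suc n) x) sums g x \<and> (g has_vector_derivative g' x) (at x within S)"
      proof (rule has_vector_derivative_series[OF _ _ ul tS])
        show "convex S" by (simp add: S_def)
        show "summable (\<lambda>n. P (Suc n) t)" using sumP1 tS SS by blast
        fix n x assume "x \<in> S"
        then have "x \<in> I" using SS ab(5) by blast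
        then show "(P (Suc n) has_vector_derivative A x *v P n x) (at x within S)"
          using dP has_vector_derivative_at_within by blast
      qed
      then show ?thesis using that by blast
    qed
    have oS: "open S" by (simp add: S_def)
    have "(g has_vector_derivative g' t) (at t within S)" using g tS by blast
    then have gt: "(g has_vector_derivative g' t) (at t)"
      using at_within_open[OF tS oS] by simp
    have Wg: "W y = v0 + g y" if "y \<in> S" for y
      using g that by (simp add: W_def sums_iff)
    have "(W has_vector_derivative g' t) (at t)"
    proof (rule has_vector_derivative_transform_within_open[of "\<lambda>y. v0 + g y"])
      show "((\<lambda>y. v0 + g y) has_vector_derivative g' t) (at t)"
        using has_vector_derivative_add[OF has_vector_derivative_const gt] by simp
      show "open S" by (simp add: S_def)
      show "t \<in> S" by fact
      show "\<And>y. y \<in> S \<Longrightarrow> v0 + g y = W y" using Wg by simp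
    qed
    moreover have "g' t = A t *v W t"
    proof -
      have st: "summable (\<lambda>n. P n t)" using sumP tS SS by blast
      have "A t *v (\<Sum>n. P n t) = (\<Sum>n. A t *v P n t)"
        by (rule bounded_linear.suminf[OF matrix_vector_mul_bounded_linear st])
      moreover have "(\<Sum>n. P n t) = W t"
        using suminf_split_head[OF st] by (simp add: W_def P0)
      ultimately show ?thesis by (simp add: g'_def)
    qed
    ultimately show ?thesis by simp
  qed
  ultimately show ?thesis by blast
qed

lemma ode_smooth:
  fixes A :: "real \<Rightarrow> real^'n^'n" and v0 :: "real^'n"
  assumes I: "is_interval I" "open I" "t0 \<in> I" and sA: "sm I A"
  shows "\<exists>V. V t0 = v0 \<and> (\<forall>t\<in>I. (V has_vector_derivative A t *v V t) (at t)) \<and> sm I V"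
proof -
  have "continuous_on I A"
  proof -
    have "\<forall>t\<in>I. (A has_vector_derivative vector_derivative A (at t)) (at t)"
      by (rule sm_deriv(1)[OF I(2) sA])
    then have "\<forall>t\<in>I. isCont A t" using has_vector_derivative_continuous by blast
    then show ?thesis by (simp add: continuous_at_imp_continuous_on)
  qed
  then obtain V where V: "V t0 = v0" "\<forall>t\<in>I. (V has_vector_derivative A t *v V t) (at t)"
    using ode_exists[OF I] by blast
  have "ck k I V" for k
  proof (induction k)
    case 0 then show ?case by simp
  next
    case (Suc k)
    have "ck k I (\<lambda>t. A t *v V t)"
      using ck_bilinear[OF bb_mv, of k I A V] sA Suc by (simp add: sm_def)
    then show ?case using V(2) by (rule ckI[rotated])
  qed
  then show ?thesis using V by (auto simp: sm_def)
qed

lemma bounded_linear_axis: "bounded_linear (axis i :: 'a::real_normed_vector \<Rightarrow> 'a^'n)"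
proof (rule bounded_linear_intro[where K=1])
  show "axis i (x + y) = axis i x + axis i y" for x y :: 'a
    by (simp add: vec_eq_iff axis_def)
  show "axis i (r *\<^sub>R x) = r *\<^sub>R axis i x" for r and x :: 'a
    by (simp add: vec_eq_iff axis_def)
  show "norm (axis i x) \<le> norm x * 1" for x :: 'a
  proof -
    have "norm (axis i x) \<le> (\<Sum>j\<in>UNIV. norm (axis i x $ j))"
      unfolding norm_vec_def by (rule L2_set_le_sum) auto
    also have "\<dots> = (\<Sum>j\<in>UNIV. if j = i then norm x else 0)"
      by (intro sum.cong) (auto simp: axis_def)
    also have "\<dots> = norm x" by simp
    finally show ?thesis by simp
  qed
qed

lemma vec_sum_axis: "(\<chi> i. f i) = (\<Sum>i\<in>UNIV. axis i (f i) :: 'a::real_normed_vector^'n)"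
  by (simp add: vec_eq_iff axis_def)

lemma sm_vec:
  fixes f :: "'n::finite \<Rightarrow> real \<Rightarrow> 'a::real_normed_vector"
  assumes "\<And>i. sm I (f i)"
  shows "sm I (\<lambda>t. \<chi> i. f i t)"
proof -
  have "sm I (\<lambda>t. \<Sum>i\<in>UNIV. axis i (f i t))"
    by (intro sm_sum sm_linear[OF bounded_linear_axis] assms) auto
  then show ?thesis by (simp add: vec_sum_axis)
qed

lemma vec_deriv:
  fixes f :: "'n::finite \<Rightarrow> real \<Rightarrow> 'a::real_normed_vector"
  assumes "\<And>i. (f i has_vector_derivative f' i) (at t)"
  shows "((\<lambda>t. \<chi> i. f i t) has_vector_derivative (\<chi> i. f' i)) (at t)"
proof -
  have "((\<lambda>t. \<Sum>i\<in>UNIV. axis i (f i t)) has_vector_derivative (\<Sum>i\<in>UNIV. axis i (f' i))) (at t)"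
    by (intro has_vector_derivative_sum bounded_linear.has_vector_derivative[OF bounded_linear_axis] assms)
  then show ?thesis by (simp add: vec_sum_axis)
qed

lemma vector_4 [simp]:
  "(vector [a,b,c,d] :: ('a::zero)^4) $ 1 = a"
  "(vector [a,b,c,d] :: ('a::zero)^4) $ 2 = b"
  "(vector [a,b,c,d] :: ('a::zero)^4) $ 3 = c"
  "(vector [a,b,c,d] :: ('a::zero)^4) $ 4 = d"
  unfolding vector_def by simp_all

lemma vector4_chi: "(vector [a,b,c,d] :: ('a::zero)^4) = (\<chi> i. if i = 1 then a else if i = 2 then b else if i = 3 then c else d)"
  by (simp add: vec_eq_iff forall_4)

lemma vector3_chi: "(vector [a,b,c] :: ('a::zero)^3) = (\<chi> i. if i = 1 then a else if i = 2 then b else c)"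
  by (simp add: vec_eq_iff forall_3)

lemma sm_vector4:
  fixes f1 f2 f3 f4 :: "real \<Rightarrow> 'a::real_normed_vector"
  assumes "sm I f1" "sm I f2" "sm I f3" "sm I f4"
  shows "sm I (\<lambda>t. vector [f1 t, f2 t, f3 t, f4 t] :: 'a^4)"
  unfolding vector4_chi
proof (rule sm_vec)
  fix i :: 4
  show "sm I (\<lambda>t. if i = 1 then f1 t else if i = 2 then f2 t else if i = 3 then f3 t else f4 t)"
    by (cases "i = 1"; cases "i = 2"; cases "i = 3") (simp_all add: assms)
qed

lemma sm_vector3:
  fixes f1 f2 f3 :: "real \<Rightarrow> 'a::real_normed_vector"
  assumes "sm I f1" "sm I f2" "sm I f3"
  shows "sm I (\<lambda>t. vector [f1 t, f2 t, f3 t] :: 'a^3)"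
  unfolding vector3_chi
proof (rule sm_vec)
  fix i :: 3
  show "sm I (\<lambda>t. if i = 1 then f1 t else if i = 2 then f2 t else f3 t)"
    by (cases "i = 1"; cases "i = 2") (simp_all add: assms)
qed

lemma vector4_deriv:
  fixes f1 f2 f3 f4 :: "real \<Rightarrow> 'a::real_normed_vector"
  assumes "(f1 has_vector_derivative g1) (at t)" "(f2 has_vector_derivative g2) (at t)"
    "(f3 has_vector_derivative g3) (at t)" "(f4 has_vector_derivative g4) (at t)"
  shows "((\<lambda>t. vector [f1 t, f2 t, f3 t, f4 t] :: 'a^4) has_vector_derivative vector [g1, g2, g3, g4]) (at t)"
  unfolding vector4_chi
proof (rule vec_deriv)
  fix i :: 4
  show "((\<lambda>t. if i = 1 then f1 t else if i = 2 then f2 t else if i = 3 then f3 t else f4 t) has_vector_derivative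
     (if i = 1 then g1 else if i = 2 then g2 else if i = 3 then g3 else g4)) (at t)"
    by (cases "i = 1"; cases "i = 2"; cases "i = 3") (simp_all add: assms)
qed

lemma rows_inner: "(Q ** transpose Q) $ i $ j = Q $ i \<bullet> Q $ j" for Q :: "real^'n^'m"
  by (simp add: matrix_matrix_mult_def transpose_def inner_vec_def)

lemma orthonormal_rows_orth:
  fixes Q :: "real^'n^'n"
  assumes "\<And>i j. Q $ i \<bullet> Q $ j = (if i = j then 1 else 0)"
  shows "orthogonal_matrix Q"
proof -
  have "Q ** transpose Q = mat 1"
    unfolding vec_eq_iff rows_inner assms by (simp add: mat_def)
  then show ?thesis
    using matrix_left_right_inverse orthogonal_matrix_def by blast
qed

lemma orthonormal_expand:
  fixes Q :: "real^'n^'n"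
  assumes "\<And>i j. Q $ i \<bullet> Q $ j = (if i = j then 1 else 0)"
  shows "v = (\<Sum>i\<in>UNIV. (v \<bullet> Q $ i) *\<^sub>R Q $ i)"
proof -
  have "transpose Q ** Q = mat 1"
    using orthonormal_rows_orth[OF assms] by (simp add: orthogonal_matrix_def)
  then have e: "v = transpose Q *v (Q *v v)"
    by (metis matrix_vector_mul_assoc matrix_vector_mul_lid)
  have c1: "(Q *v v) $ i = v \<bullet> Q $ i" for i
    by (simp add: matrix_vector_mult_def inner_vec_def mult.commute)
  have c2: "(transpose Q *v w) $ k = (\<Sum>i\<in>UNIV. w $ i * Q $ i $ k)" for w k
    by (simp add: matrix_vector_mult_def transpose_def mult.commute)
  show ?thesis
  proof (subst vec_eq_iff, intro allI)
    fix k
    have "v $ k = (transpose Q *v (Q *v v)) $ k" using arg_cong[OF e, of "\<lambda>x. x $ k"] .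
    also have "\<dots> = (\<Sum>i\<in>UNIV. (Q *v v) $ i * Q $ i $ k)" by (rule c2)
    also have "\<dots> = (\<Sum>i\<in>UNIV. (v \<bullet> Q $ i) * Q $ i $ k)" by (simp only: c1)
    finally have "v $ k = (\<Sum>i\<in>UNIV. (v \<bullet> Q $ i) * Q $ i $ k)" .
    then show "v $ k = (\<Sum>i\<in>UNIV. (v \<bullet> Q $ i) *\<^sub>R Q $ i) $ k" by simp
  qed
qed

lemma mult_row: "(X ** Z) $ i = (\<Sum>j\<in>UNIV. X $ i $ j *\<^sub>R Z $ j)" for X Z :: "real^'n^'n"
  by (simp add: vec_eq_iff matrix_matrix_mult_def)

lemma const_deriv0:
  assumes "open I" "t \<in> I" "(f has_vector_derivative f') (at t)" "\<And>s. s \<in> I \<Longrightarrow> f s = c"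
  shows "f' = 0"
proof -
  have "(f has_vector_derivative 0) (at t)"
    by (rule has_vector_derivative_transform_within_open[OF has_vector_derivative_const assms(1,2)])
      (use assms(4) in auto)
  then show ?thesis using assms(3) vector_derivative_at by metis
qed

lemma deriv0_const:
  fixes f :: "real \<Rightarrow> 'a::real_normed_vector"
  assumes "is_interval I" "\<And>t. t \<in> I \<Longrightarrow> (f has_vector_derivative 0) (at t)" "s \<in> I" "t \<in> I"
  shows "f s = f t"
proof -
  have "convex I" using assms(1) by (simp add: is_interval_convex_1)
  then obtain c where "\<And>x. x \<in> I \<Longrightarrow> f x = c"
    using has_vector_derivative_zero_constant[of I f] assms(2) has_vector_derivative_at_within by blast
  then show ?thesis using assms(3,4) by simp
qed

lemma inner_deriv:
  fixes f g :: "real \<Rightarrow> 'a::real_inner"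
  assumes "(f has_vector_derivative f') (at t)" "(g has_vector_derivative g') (at t)"
  shows "((\<lambda>s. f s \<bullet> g s) has_vector_derivative (f t \<bullet> g' + f' \<bullet> g t)) (at t)"
  using bounded_bilinear.has_vector_derivative[OF bounded_bilinear_inner assms] by simp

lemma inner_const_deriv:
  fixes f g :: "real \<Rightarrow> 'a::real_inner"
  assumes "open I" "t \<in> I" "(f has_vector_derivative f') (at t)" "(g has_vector_derivative g') (at t)"
    "\<And>s. s \<in> I \<Longrightarrow> f s \<bullet> g s = c"
  shows "f' \<bullet> g t + f t \<bullet> g' = 0"
  using const_deriv0[OF assms(1,2) inner_deriv[OF assms(3,4)] assms(5)] by (simp add: add.commute)

lemma sm_norm_inv:
  fixes v :: "real \<Rightarrow> 'a::real_inner"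
  assumes "open I" "sm I v" "\<And>t. t \<in> I \<Longrightarrow> v t \<noteq> 0"
  shows "sm I (\<lambda>t. inverse (norm (v t)))"
proof -
  have s1: "sm I (\<lambda>t. v t \<bullet> v t)" by (rule sm_inner[OF assms(2) assms(2)])
  have s2: "sm I (\<lambda>t. sqrt (v t \<bullet> v t))"
    by (rule sm_comp[OF open_greaterThan sm_sqrt s1]) (use assms(3) in auto)
  have s3: "sm I (\<lambda>t. inverse (sqrt (v t \<bullet> v t)))"
    by (rule sm_comp[OF open_greaterThan sm_inverse s2]) (use assms(3) in auto)
  then show ?thesis by (simp add: norm_eq_sqrt_inner)
qed

lemma bb_cross: "bounded_bilinear cross3"
  using bilinear_cross bilinear_conv_bounded_bilinear by blast

lemma cross_unit:
  fixes x y :: "real^3"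
  assumes "x \<bullet> x = 1" "y \<bullet> y = 1" "x \<bullet> y = 0"
  shows "cross3 x y \<bullet> cross3 x y = 1" "cross3 x y \<bullet> x = 0" "cross3 x y \<bullet> y = 0"
proof -
  have "(norm (cross3 x y))\<^sup>2 = (norm x)\<^sup>2 * (norm y)\<^sup>2 - (x \<bullet> y)\<^sup>2" by (rule norm_cross)
  then show "cross3 x y \<bullet> cross3 x y = 1" using assms by (simp add: power2_norm_eq_inner)
  show "cross3 x y \<bullet> x = 0" "cross3 x y \<bullet> y = 0" using dot_cross_self by (auto simp: inner_commute)
qed

lemma avoid:
  fixes k :: "real \<Rightarrow> real^3"
  assumes "open I" "I \<noteq> {}" "\<And>t. t \<in> I \<Longrightarrow> k differentiable (at t)" "\<And>t. t \<in> I \<Longrightarrow> k t \<noteq> 0"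
  shows "\<exists>u. u \<bullet> u = 1 \<and> (\<forall>t\<in>I. \<forall>\<mu>. k t \<noteq> \<mu> *\<^sub>R u)"
proof -
  define f where "f p = snd p *\<^sub>R k (fst p)" for p :: "real \<times> real"
  have "f differentiable (at p)" if "p \<in> I \<times> UNIV" for p
  proof -
    have "(k \<circ> fst) differentiable (at p)"
      using that assms(3) by (intro differentiable_chain_at bounded_linear_imp_differentiable[OF bounded_linear_fst]) auto
    then show ?thesis unfolding f_def
      using bounded_linear_imp_differentiable[OF bounded_linear_snd]
      by (intro differentiable_scaleR) (auto simp: o_def)
  qed
  then have "f differentiable_on I \<times> UNIV"
    by (simp add: differentiable_at_imp_differentiable_on)
  then have "negligible (f ` (I \<times> UNIV))"
    by (intro negligible_differentiable_image_lowdim) auto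
  then have "f ` (I \<times> UNIV) \<noteq> UNIV" using non_negligible_UNIV by metis
  then obtain c where c: "c \<notin> f ` (I \<times> UNIV)" by blast
  obtain t0 where t0: "t0 \<in> I" using assms(2) by blast
  have "c \<noteq> 0"
  proof
    assume "c = 0"
    then have "c = f (t0, 0)" by (simp add: f_def)
    then show False using c t0 by auto
  qed
  define u where "u = c /\<^sub>R norm c"
  have "u \<bullet> u = 1" using \<open>c \<noteq> 0\<close> by (simp add: u_def inner_commute power2_norm_eq_inner[symmetric] divide_simps)
  moreover have "\<forall>t\<in>I. \<forall>\<mu>. k t \<noteq> \<mu> *\<^sub>R u"
  proof (intro ballI allI notI)
    fix t \<mu> assume t: "t \<in> I" and e: "k t = \<mu> *\<^sub>R u"
    have "\<mu> \<noteq> 0" using e assms(4)[OF t] by auto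
    have "c = (norm c / \<mu>) *\<^sub>R k t" using e \<open>\<mu> \<noteq> 0\<close> \<open>c \<noteq> 0\<close> by (simp add: u_def)
    then have "c = f (t, norm c / \<mu>)" by (simp add: f_def)
    then show False using c t by auto
  qed
  ultimately show ?thesis by blast
qed

lemma scaleR_deriv:
  fixes f :: "real \<Rightarrow> real" and g :: "real \<Rightarrow> 'a::real_normed_vector"
  assumes "(f has_vector_derivative f') (at t)" "(g has_vector_derivative g') (at t)"
  shows "((\<lambda>s. f s *\<^sub>R g s) has_vector_derivative (f t *\<^sub>R g' + f' *\<^sub>R g t)) (at t)"
  using bounded_bilinear.has_vector_derivative[OF bounded_bilinear_scaleR assms] by simp

lemma nth_deriv:
  assumes "(v has_vector_derivative v') (at t)"
  shows "((\<lambda>s. v s $ i) has_vector_derivative v' $ i) (at t)"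
  using bounded_linear.has_vector_derivative[OF bounded_linear_vec_nth assms] .

locale crv =
  fixes I :: "real set" and \<gamma> :: "real \<Rightarrow> real^4"
  assumes reg: "two_regular I \<gamma>"
begin

lemma oI: "open I" and iI: "is_interval I" and neI: "I \<noteq> {}"
  using reg by (auto simp: two_regular_def arclength_curve_def open_interval_def)

definition T where "T = tangent \<gamma>"
definition T' where "T' t = vector_derivative T (at t)"

lemma sT: "sm I T"
proof -
  have "sm I \<gamma>" using reg smooth_on_iff[OF oI] by (auto simp: two_regular_def arclength_curve_def)
  then have "sm I (\<lambda>t. vector_derivative \<gamma> (at t))" by (rule sm_deriv(2)[OF oI])
  moreover have "T = (\<lambda>t. vector_derivative \<gamma> (at t))" by (simp add: T_def tangent_def fun_eq_iff)
  ultimately show ?thesis by simp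
qed

lemma dT: "t \<in> I \<Longrightarrow> (T has_vector_derivative T' t) (at t)"
  using sm_deriv(1)[OF oI sT] by (simp add: T'_def)

lemma sT': "sm I T'"
  using sm_deriv(2)[OF oI sT] by (simp add: T'_def[abs_def])

lemma TT: "t \<in> I \<Longrightarrow> T t \<bullet> T t = 1"
  using reg by (auto simp: two_regular_def arclength_curve_def T_def power2_norm_eq_inner[symmetric])

lemma T'nz: "t \<in> I \<Longrightarrow> T' t \<noteq> 0"
  using reg by (auto simp: two_regular_def T'_def T_def)

lemma TT': "t \<in> I \<Longrightarrow> T t \<bullet> T' t = 0"
  using inner_const_deriv[OF oI _ dT dT, of t 1] TT by (simp add: inner_commute)

definition t0 where "t0 = (SOME t. t \<in> I)"
lemma t0I: "t0 \<in> I" using neI by (simp add: t0_def some_in_eq)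

definition BA :: "real \<Rightarrow> real^4^4" where "BA t = (\<chi> i j. - (T t $ i * T' t $ j))"

lemma BA_mult: "BA t *v v = - (T' t \<bullet> v) *\<^sub>R T t"
proof -
  have "(BA t *v v) $ i = - (T' t \<bullet> v) * T t $ i" for i
  proof -
    have "(BA t *v v) $ i = (\<Sum>j\<in>UNIV. - (T t $ i * T' t $ j) * v $ j)"
      by (simp add: BA_def matrix_vector_mult_def)
    also have "\<dots> = - (T' t \<bullet> v) * T t $ i"
      by (simp add: inner_vec_def sum_distrib_left sum_distrib_right sum_negf mult_ac)
    finally show ?thesis .
  qed
  then show ?thesis by (simp add: vec_eq_iff)
qed

lemma sBA: "sm I BA"
  unfolding BA_def by (intro sm_vec sm_minus sm_mult sm_nth sT sT')

definition Q0 :: "real^4^4" where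
  "Q0 = transpose (SOME A. orthogonal_matrix A \<and> A *v axis 1 1 = T t0)"

lemma Q0: "Q0 $ i \<bullet> Q0 $ j = (if i = j then 1 else 0)" "Q0 $ 1 = T t0"
proof -
  have "norm (T t0) = 1" using TT[OF t0I] by (simp add: norm_eq_sqrt_inner)
  then obtain A0 where "orthogonal_matrix A0" "A0 *v axis 1 1 = T t0"
    using orthogonal_matrix_exists_basis[of "T t0" 1] by blast
  then have ex: "\<exists>A. orthogonal_matrix A \<and> A *v axis 1 1 = T t0" by blast
  obtain A where A: "orthogonal_matrix A" "A *v axis 1 1 = T t0" "Q0 = transpose A"
    unfolding Q0_def using someI_ex[OF ex] by blast
  have "orthogonal_matrix Q0" using A by simp
  then have "Q0 ** transpose Q0 = mat 1" by (simp add: orthogonal_matrix_def)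
  then have "(Q0 ** transpose Q0) $ i $ j = mat 1 $ i $ j" by simp
  then show "Q0 $ i \<bullet> Q0 $ j = (if i = j then 1 else 0)"
    by (simp add: rows_inner mat_def)
  have "(A *v axis 1 1) $ k = A $ k $ 1" for k
    by (simp add: matrix_vector_mult_def axis_def if_distrib cong: if_cong)
  then show "Q0 $ 1 = T t0" using A by (simp add: vec_eq_iff transpose_def)
qed

definition Vs :: "4 \<Rightarrow> real \<Rightarrow> real^4" where
  "Vs i = (SOME V. V t0 = Q0 $ i \<and> (\<forall>t\<in>I. (V has_vector_derivative BA t *v V t) (at t)) \<and> sm I V)"

lemma Vs: "Vs i t0 = Q0 $ i" "\<And>t. t \<in> I \<Longrightarrow> (Vs i has_vector_derivative BA t *v Vs i t) (at t)" "sm I (Vs i)"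
proof -
  have "\<exists>V. V t0 = Q0 $ i \<and> (\<forall>t\<in>I. (V has_vector_derivative BA t *v V t) (at t)) \<and> sm I V"
    by (rule ode_smooth[OF iI oI t0I sBA])
  then have "Vs i t0 = Q0 $ i \<and> (\<forall>t\<in>I. (Vs i has_vector_derivative BA t *v Vs i t) (at t)) \<and> sm I (Vs i)"
    unfolding Vs_def by (rule someI_ex)
  then show "Vs i t0 = Q0 $ i" "\<And>t. t \<in> I \<Longrightarrow> (Vs i has_vector_derivative BA t *v Vs i t) (at t)" "sm I (Vs i)"
    by auto
qed

definition R :: "4 \<Rightarrow> real \<Rightarrow> real^4" where "R i = (if i = 1 then T else Vs i)"

lemma dR: "i \<noteq> 1 \<Longrightarrow> t \<in> I \<Longrightarrow> (R i has_vector_derivative - (T' t \<bullet> R i t) *\<^sub>R T t) (at t)"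
  using Vs(2)[of t i] by (simp add: R_def BA_mult)

lemma sR: "sm I (R i)"
  by (simp add: R_def sT Vs(3))

lemma R1: "R 1 = T" by (simp add: R_def)

lemma R_T: assumes "i \<noteq> 1" "t \<in> I" shows "T t \<bullet> R i t = 0"
proof -
  have "(\<lambda>s. T s \<bullet> R i s) t = (\<lambda>s. T s \<bullet> R i s) t0"
  proof (rule deriv0_const[OF iI _ assms(2) t0I])
    fix s assume s: "s \<in> I"
    show "((\<lambda>s. T s \<bullet> R i s) has_vector_derivative 0) (at s)"
      using inner_deriv[OF dT[OF s] dR[OF assms(1) s]]
      by (rule has_vector_derivative_eq_rhs) (simp add: TT[OF s] inner_commute)
  qed
  also have "\<dots> = 0" using assms(1) Q0(1)[of 1 i] Q0(2) Vs(1) by (simp add: R_def)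
  finally show ?thesis by simp
qed

lemma R_R: assumes "i \<noteq> 1" "j \<noteq> 1" "t \<in> I" shows "R i t \<bullet> R j t = Q0 $ i \<bullet> Q0 $ j"
proof -
  have "(\<lambda>s. R i s \<bullet> R j s) t = (\<lambda>s. R i s \<bullet> R j s) t0"
  proof (rule deriv0_const[OF iI _ assms(3) t0I])
    fix s assume s: "s \<in> I"
    show "((\<lambda>s. R i s \<bullet> R j s) has_vector_derivative 0) (at s)"
      using inner_deriv[OF dR[OF assms(1) s] dR[OF assms(2) s]]
      by (rule has_vector_derivative_eq_rhs) (simp add: R_T[OF assms(1) s] R_T[OF assms(2) s] inner_commute)
  qed
  also have "\<dots> = Q0 $ i \<bullet> Q0 $ j" using assms Vs(1) by (simp add: R_def)
  finally show ?thesis by simp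
qed

lemma R_on: assumes "t \<in> I" shows "R i t \<bullet> R j t = (if i = j then 1 else 0)"
proof (cases "i = 1"; cases "j = 1")
  assume "i = 1" "j = 1" then show ?thesis by (simp add: R1 TT[OF assms])
next
  assume "i = 1" "j \<noteq> 1" then show ?thesis using R_T[OF _ assms, of j] by (simp add: R1)
next
  assume "i \<noteq> 1" "j = 1"
  moreover have "R i t \<bullet> T t = T t \<bullet> R i t" by (rule inner_commute)
  ultimately show ?thesis using R_T[OF _ assms, of i] by (simp add: R1)
next
  assume "i \<noteq> 1" "j \<noteq> 1" then show ?thesis using R_R[OF _ _ assms, of i j] Q0(1)[of i j] by simp
qed

end

context crv
begin

definition k :: "real \<Rightarrow> real^3" where
  "k t = vector [T' t \<bullet> R 2 t, T' t \<bullet> R 3 t, T' t \<bullet> R 4 t]"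

definition Lf :: "real \<Rightarrow> real^3 \<Rightarrow> real^4" where
  "Lf t v = v $ 1 *\<^sub>R R 2 t + v $ 2 *\<^sub>R R 3 t + v $ 3 *\<^sub>R R 4 t"

lemma R_on': assumes "t \<in> I"
  shows "R 2 t \<bullet> R 2 t = 1" "R 3 t \<bullet> R 3 t = 1" "R 4 t \<bullet> R 4 t = 1"
    "R 2 t \<bullet> R 3 t = 0" "R 2 t \<bullet> R 4 t = 0" "R 3 t \<bullet> R 4 t = 0"
    "R 3 t \<bullet> R 2 t = 0" "R 4 t \<bullet> R 2 t = 0" "R 4 t \<bullet> R 3 t = 0"
    "T t \<bullet> R 2 t = 0" "T t \<bullet> R 3 t = 0" "T t \<bullet> R 4 t = 0"
  using R_on[OF assms] R_T[OF _ assms] by auto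

lemma L_inner: assumes "t \<in> I" shows "Lf t v \<bullet> Lf t w = v \<bullet> w"
proof -
  have "Lf t v \<bullet> Lf t w = v$1*w$1 + v$2*w$2 + v$3*w$3"
    by (simp add: Lf_def inner_add_left inner_add_right R_on'[OF assms] inner_commute[of "R 3 t" "R 2 t"]
        inner_commute[of "R 4 t" "R 2 t"] inner_commute[of "R 4 t" "R 3 t"])
  moreover have "v \<bullet> w = v$1*w$1 + v$2*w$2 + v$3*w$3" by (simp add: inner_vec_def sum_3)
  ultimately show ?thesis by simp
qed

lemma L_T: "t \<in> I \<Longrightarrow> T t \<bullet> Lf t v = 0"
  by (simp add: Lf_def inner_add_right R_on')

lemma L_lin3: "Lf t (x *\<^sub>R a + y *\<^sub>R b + z *\<^sub>R c) = x *\<^sub>R Lf t a + y *\<^sub>R Lf t b + z *\<^sub>R Lf t c"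
  by (simp add: Lf_def algebra_simps)

lemma L_zero: "Lf t 0 = 0" by (simp add: Lf_def)

lemma T'_L: assumes "t \<in> I" shows "T' t = Lf t (k t)"
proof -
  define Q where "Q = (\<chi> i. R i t)"
  have "Q $ i \<bullet> Q $ j = (if i = j then 1 else 0)" for i j
    by (simp add: Q_def R_on[OF assms])
  then have "T' t = (\<Sum>i\<in>UNIV. (T' t \<bullet> Q $ i) *\<^sub>R Q $ i)" by (rule orthonormal_expand)
  also have "\<dots> = (T' t \<bullet> T t) *\<^sub>R T t + Lf t (k t)"
    by (simp add: sum_4 Q_def R1 Lf_def k_def add.assoc)
  also have "\<dots> = Lf t (k t)" using TT'[OF assms] by (simp add: inner_commute)
  finally show ?thesis .
qed

lemma L_deriv:
  assumes t: "t \<in> I" and dv: "(v has_vector_derivative v') (at t)"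
  shows "((\<lambda>s. Lf s (v s)) has_vector_derivative (Lf t v' - (v t \<bullet> k t) *\<^sub>R T t)) (at t)"
proof -
  have d: "((\<lambda>s. v s $ i *\<^sub>R R j s) has_vector_derivative
      (v t $ i *\<^sub>R (- (T' t \<bullet> R j t) *\<^sub>R T t) + v' $ i *\<^sub>R R j t)) (at t)" if "j \<noteq> 1" for i j
    by (rule scaleR_deriv[OF nth_deriv[OF dv] dR[OF that t]])
  have "((\<lambda>s. Lf s (v s)) has_vector_derivative
     (v t $ 1 *\<^sub>R (- (T' t \<bullet> R 2 t) *\<^sub>R T t) + v' $ 1 *\<^sub>R R 2 t) +
     (v t $ 2 *\<^sub>R (- (T' t \<bullet> R 3 t) *\<^sub>R T t) + v' $ 2 *\<^sub>R R 3 t) +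
     (v t $ 3 *\<^sub>R (- (T' t \<bullet> R 4 t) *\<^sub>R T t) + v' $ 3 *\<^sub>R R 4 t)) (at t)"
    unfolding Lf_def by (intro has_vector_derivative_add d) auto
  then show ?thesis
    by (rule has_vector_derivative_eq_rhs) (simp add: Lf_def k_def inner_vec_def sum_3 algebra_simps)
qed

lemma sL: "sm I v \<Longrightarrow> sm I (\<lambda>t. Lf t (v t))"
  unfolding Lf_def by (intro sm_add sm_scaleR sm_nth sR)

lemma sk: "sm I k"
  unfolding k_def by (intro sm_vector3 sm_inner sT' sR)

lemma k_nz: "t \<in> I \<Longrightarrow> k t \<noteq> 0"
  using T'_L T'nz L_zero by metis

lemma kdiff: "t \<in> I \<Longrightarrow> k differentiable (at t)"
  using sm_deriv(1)[OF oI sk] differentiableI_vector by blast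

definition Zf :: "(real \<Rightarrow> real^3) \<Rightarrow> (real \<Rightarrow> real^3) \<Rightarrow> (real \<Rightarrow> real^3) \<Rightarrow> real \<Rightarrow> real^4^4" where
  "Zf a b c t = vector [T t, Lf t (a t), Lf t (b t), Lf t (c t)]"

definition Xg :: "(real \<Rightarrow> real^3) \<Rightarrow> (real \<Rightarrow> real^3) \<Rightarrow> (real \<Rightarrow> real^3) \<Rightarrow> real \<Rightarrow> real^4^4" where
  "Xg a b c t = vector [
     vector [0, k t \<bullet> a t, k t \<bullet> b t, k t \<bullet> c t],
     vector [- (a t \<bullet> k t), 0, vector_derivative a (at t) \<bullet> b t, vector_derivative a (at t) \<bullet> c t],
     vector [- (b t \<bullet> k t), vector_derivative b (at t) \<bullet> a t, 0, vector_derivative b (at t) \<bullet> c t],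
     vector [- (c t \<bullet> k t), vector_derivative c (at t) \<bullet> a t, vector_derivative c (at t) \<bullet> b t, 0]]"

lemma exp3:
  fixes a b c :: "real^3"
  assumes "a \<bullet> a = 1" "b \<bullet> b = 1" "c \<bullet> c = 1" "a \<bullet> b = 0" "a \<bullet> c = 0" "b \<bullet> c = 0"
  shows "u = (u \<bullet> a) *\<^sub>R a + (u \<bullet> b) *\<^sub>R b + (u \<bullet> c) *\<^sub>R c"
proof -
  define Q where "Q = (vector [a, b, c] :: real^3^3)"
  have "\<forall>i j. Q $ i \<bullet> Q $ j = (if i = j then 1 else 0)"
    unfolding forall_3 using assms by (simp add: Q_def inner_commute)
  then have "u = (\<Sum>i\<in>UNIV. (u \<bullet> Q $ i) *\<^sub>R Q $ i)" by (intro orthonormal_expand) auto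
  then show ?thesis by (simp add: sum_3 Q_def add.assoc)
qed

end

context crv
begin

lemma L_add: "Lf t (u + w) = Lf t u + Lf t w"
  by (simp add: Lf_def algebra_simps)
lemma L_scale: "Lf t (r *\<^sub>R u) = r *\<^sub>R Lf t u"
  by (simp add: Lf_def algebra_simps)

lemma frame_gen:
  assumes sa: "sm I a" and sb: "sm I b" and sc: "sm I c"
    and on: "\<And>t. t \<in> I \<Longrightarrow> a t \<bullet> a t = 1 \<and> b t \<bullet> b t = 1 \<and> c t \<bullet> c t = 1 \<and>
                 a t \<bullet> b t = 0 \<and> a t \<bullet> c t = 0 \<and> b t \<bullet> c t = 0"
  shows "frame_on I \<gamma> (Zf a b c)" "coeff_matrix I (Zf a b c) (Xg a b c)"
proof -
  have sZ: "sm I (Zf a b c)"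
    unfolding Zf_def[abs_def] by (intro sm_vector4 sT sL sa sb sc)
  have orth: "orthogonal_matrix (Zf a b c t)" if t: "t \<in> I" for t
  proof (rule orthonormal_rows_orth)
    have o: "a t \<bullet> a t = 1" "b t \<bullet> b t = 1" "c t \<bullet> c t = 1" "a t \<bullet> b t = 0" "a t \<bullet> c t = 0" "b t \<bullet> c t = 0"
      using on[OF t] by auto
    have o2: "b t \<bullet> a t = 0" "c t \<bullet> a t = 0" "c t \<bullet> b t = 0" using o by (auto simp: inner_commute)
    have lt: "Lf t v \<bullet> T t = 0" for v using L_T[OF t] by (simp add: inner_commute)
    have "\<forall>i j. Zf a b c t $ i \<bullet> Zf a b c t $ j = (if i = j then 1 else 0)"
      unfolding forall_4 by (simp add: Zf_def TT[OF t] L_T[OF t] L_inner[OF t] lt o o2)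
    then show "\<And>i j. Zf a b c t $ i \<bullet> Zf a b c t $ j = (if i = j then 1 else 0)" by blast
  qed
  have "smooth_on I (Zf a b c)" using sZ smooth_on_iff[OF oI] by blast
  moreover have "\<forall>t\<in>I. orthogonal_matrix (Zf a b c t) \<and> Zf a b c t $ 1 = tangent \<gamma> t"
    using orth by (simp add: Zf_def T_def)
  ultimately show "frame_on I \<gamma> (Zf a b c)" by (simp add: frame_on_def)
  show "coeff_matrix I (Zf a b c) (Xg a b c)"
    unfolding coeff_matrix_def
  proof
    fix t assume t: "t \<in> I"
    have o: "a t \<bullet> a t = 1" "b t \<bullet> b t = 1" "c t \<bullet> c t = 1" "a t \<bullet> b t = 0" "a t \<bullet> c t = 0" "b t \<bullet> c t = 0"
      using on[OF t] by auto
    define a' where "a' = vector_derivative a (at t)"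
    define b' where "b' = vector_derivative b (at t)"
    define c' where "c' = vector_derivative c (at t)"
    have da: "(a has_vector_derivative a') (at t)" using sm_deriv(1)[OF oI sa] t by (simp add: a'_def)
    have db: "(b has_vector_derivative b') (at t)" using sm_deriv(1)[OF oI sb] t by (simp add: b'_def)
    have dc: "(c has_vector_derivative c') (at t)" using sm_deriv(1)[OF oI sc] t by (simp add: c'_def)
    have aa: "a' \<bullet> a t = 0" using inner_const_deriv[OF oI t da da, of 1] on by (simp add: inner_commute)
    have bb: "b' \<bullet> b t = 0" using inner_const_deriv[OF oI t db db, of 1] on by (simp add: inner_commute)
    have cc: "c' \<bullet> c t = 0" using inner_const_deriv[OF oI t dc dc, of 1] on by (simp add: inner_commute)
    have E: "u = (u \<bullet> a t) *\<^sub>R a t + (u \<bullet> b t) *\<^sub>R b t + (u \<bullet> c t) *\<^sub>R c t" for u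
      by (rule exp3[OF o])
    have r1: "T' t = (k t \<bullet> a t) *\<^sub>R Lf t (a t) + (k t \<bullet> b t) *\<^sub>R Lf t (b t) + (k t \<bullet> c t) *\<^sub>R Lf t (c t)"
      using T'_L[OF t] arg_cong[OF E[of "k t"], of "Lf t"] by (simp add: L_add L_scale)
    have r2: "Lf t a' - (a t \<bullet> k t) *\<^sub>R T t = - (a t \<bullet> k t) *\<^sub>R T t + (a' \<bullet> b t) *\<^sub>R Lf t (b t) + (a' \<bullet> c t) *\<^sub>R Lf t (c t)"
      using arg_cong[OF E[of a'], of "Lf t"] aa by (simp add: L_add L_scale)
    have r3: "Lf t b' - (b t \<bullet> k t) *\<^sub>R T t = - (b t \<bullet> k t) *\<^sub>R T t + (b' \<bullet> a t) *\<^sub>R Lf t (a t) + (b' \<bullet> c t) *\<^sub>R Lf t (c t)"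
      using arg_cong[OF E[of b'], of "Lf t"] bb by (simp add: L_add L_scale algebra_simps)
    have r4: "Lf t c' - (c t \<bullet> k t) *\<^sub>R T t = - (c t \<bullet> k t) *\<^sub>R T t + (c' \<bullet> a t) *\<^sub>R Lf t (a t) + (c' \<bullet> b t) *\<^sub>R Lf t (b t)"
      using arg_cong[OF E[of c'], of "Lf t"] cc by (simp add: L_add L_scale algebra_simps)
    have D: "(Zf a b c has_vector_derivative
        vector [T' t, Lf t a' - (a t \<bullet> k t) *\<^sub>R T t, Lf t b' - (b t \<bullet> k t) *\<^sub>R T t, Lf t c' - (c t \<bullet> k t) *\<^sub>R T t]) (at t)"
      unfolding Zf_def[abs_def]
      by (intro vector4_deriv dT[OF t] L_deriv[OF t] da db dc)
    have "vector [T' t, Lf t a' - (a t \<bullet> k t) *\<^sub>R T t, Lf t b' - (b t \<bullet> k t) *\<^sub>R T t, Lf t c' - (c t \<bullet> k t) *\<^sub>R T t]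
        = Xg a b c t ** Zf a b c t"
      unfolding vec_eq_iff[of "vector _"] forall_4 mult_row sum_4
      by (simp add: Xg_def Zf_def a'_def[symmetric] b'_def[symmetric] c'_def[symmetric] r1 r2 r3 r4)
    with D show "(Zf a b c has_vector_derivative Xg a b c t ** Zf a b c t) (at t)" by simp
  qed
qed

end

lemma frame_typeI:
  assumes "frame_on I \<gamma> Z" "coeff_matrix I Z X" "sm I x1" "sm I x2" "sm I x3" "open I"
    "\<And>t. t \<in> I \<Longrightarrow> X t = M (x1 t) (x2 t) (x3 t)"
  shows "frame_of_type M I \<gamma> Z"
proof -
  have p: "id permutes (UNIV - {1::4})" by (rule permutes_id)
  have pz: "permute_frame id Z = Z" by (simp add: permute_frame_def[abs_def] fun_eq_iff)
  have "coeff_matrix I Z (\<lambda>t. M (x1 t) (x2 t) (x3 t))"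
    using assms(2,7) by (simp add: coeff_matrix_def)
  then show ?thesis
    unfolding frame_of_type_def using assms(1,3,4,5) smooth_on_iff[OF assms(6)] p pz
    by metis
qed

context crv
begin

lemma typeD: "\<exists>Z. frame_of_type typeD_matrix I \<gamma> Z"
proof -
  define n where "n t = inverse (norm (k t)) *\<^sub>R k t" for t
  have sn: "sm I n" unfolding n_def[abs_def]
    by (intro sm_scaleR sm_norm_inv[OF oI sk k_nz] sk)
  have nn: "n t \<bullet> n t = 1" if "t \<in> I" for t
    using k_nz[OF that] by (simp add: n_def power2_norm_eq_inner[symmetric] power2_eq_square)
  have kn: "k t = norm (k t) *\<^sub>R n t" if "t \<in> I" for t
    using k_nz[OF that] by (simp add: n_def)
  define n' where "n' t = vector_derivative n (at t)" for t
  have dn: "t \<in> I \<Longrightarrow> (n has_vector_derivative n' t) (at t)" for t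
    using sm_deriv(1)[OF oI sn] by (simp add: n'_def)
  have sn': "sm I n'" using sm_deriv(2)[OF oI sn] by (simp add: n'_def[abs_def])
  have nn': "n t \<bullet> n' t = 0" if t: "t \<in> I" for t
    using inner_const_deriv[OF oI t dn[OF t] dn[OF t], of 1] nn by (simp add: inner_commute)
  define An :: "real \<Rightarrow> real^3^3" where "An t = (\<chi> i j. - (n t $ i * n' t $ j))" for t
  have An_mult: "An t *v v = - (n' t \<bullet> v) *\<^sub>R n t" for t v
  proof -
    have "(An t *v v) $ i = - (n' t \<bullet> v) * n t $ i" for i
    proof -
      have "(An t *v v) $ i = (\<Sum>j\<in>UNIV. - (n t $ i * n' t $ j) * v $ j)"
        by (simp add: An_def matrix_vector_mult_def)
      also have "\<dots> = - (n' t \<bullet> v) * n t $ i"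
        by (simp add: inner_vec_def sum_distrib_left sum_distrib_right sum_negf mult_ac)
      finally show ?thesis .
    qed
    then show ?thesis by (simp add: vec_eq_iff)
  qed
  have sAn: "sm I An" unfolding An_def[abs_def] by (intro sm_vec sm_minus sm_mult sm_nth sn sn')
  have "norm (n t0) = 1" using nn[OF t0I] by (simp add: norm_eq_sqrt_inner)
  then obtain A1 :: "real^3^3" where A1: "orthogonal_matrix A1" "A1 *v axis 1 1 = n t0"
    using orthogonal_matrix_exists_basis[of "n t0" 1] by blast
  define Q1 where "Q1 = transpose A1"
  have "orthogonal_matrix Q1" using A1 by (simp add: Q1_def)
  then have "Q1 ** transpose Q1 = mat 1" by (simp add: orthogonal_matrix_def)
  then have "(Q1 ** transpose Q1) $ i $ j = mat 1 $ i $ j" for i j by simp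
  then have Q1o: "Q1 $ i \<bullet> Q1 $ j = (if i = j then 1 else 0)" for i j
    by (simp add: rows_inner mat_def)
  have "(A1 *v axis 1 1) $ k = A1 $ k $ 1" for k
    by (simp add: matrix_vector_mult_def axis_def if_distrib cong: if_cong)
  then have Q11: "Q1 $ 1 = n t0" using A1 by (simp add: vec_eq_iff transpose_def Q1_def)
  obtain e2 where e2: "e2 t0 = Q1 $ 2" "\<forall>t\<in>I. (e2 has_vector_derivative An t *v e2 t) (at t)" "sm I e2"
    using ode_smooth[OF iI oI t0I sAn] by blast
  have de2: "t \<in> I \<Longrightarrow> (e2 has_vector_derivative - (n' t \<bullet> e2 t) *\<^sub>R n t) (at t)" for t
    using e2(2) by (simp add: An_mult)
  have e2n: "e2 t \<bullet> n t = 0" if t: "t \<in> I" for t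
  proof -
    have "(\<lambda>s. e2 s \<bullet> n s) t = (\<lambda>s. e2 s \<bullet> n s) t0"
    proof (rule deriv0_const[OF iI _ t t0I])
      fix s assume s: "s \<in> I"
      show "((\<lambda>s. e2 s \<bullet> n s) has_vector_derivative 0) (at s)"
        using inner_deriv[OF de2[OF s] dn[OF s]]
        by (rule has_vector_derivative_eq_rhs) (simp add: nn[OF s] inner_commute)
    qed
    also have "\<dots> = 0" using e2(1) Q11 Q1o[of 2 1] by simp
    finally show ?thesis by simp
  qed
  have e2e2: "e2 t \<bullet> e2 t = 1" if t: "t \<in> I" for t
  proof -
    have "(\<lambda>s. e2 s \<bullet> e2 s) t = (\<lambda>s. e2 s \<bullet> e2 s) t0"
    proof (rule deriv0_const[OF iI _ t t0I])
      fix s assume s: "s \<in> I"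
      show "((\<lambda>s. e2 s \<bullet> e2 s) has_vector_derivative 0) (at s)"
        using inner_deriv[OF de2[OF s] de2[OF s]]
        by (rule has_vector_derivative_eq_rhs) (simp add: e2n[OF s] inner_commute)
    qed
    also have "\<dots> = 1" using e2(1) Q1o[of 2 2] by simp
    finally show ?thesis by simp
  qed
  define e3 where "e3 t = cross3 (n t) (e2 t)" for t
  have ne2: "n t \<bullet> e2 t = 0" if "t \<in> I" for t using e2n[OF that] by (simp add: inner_commute)
  have e3p: "e3 t \<bullet> e3 t = 1" "e3 t \<bullet> n t = 0" "e3 t \<bullet> e2 t = 0" if "t \<in> I" for t
    using cross_unit[OF nn[OF that] e2e2[OF that] ne2[OF that]] by (simp_all add: e3_def)
  have se3: "sm I e3" unfolding e3_def[abs_def] by (rule sm_bilinear[OF bb_cross sn e2(3)])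
  have on: "n t \<bullet> n t = 1 \<and> e2 t \<bullet> e2 t = 1 \<and> e3 t \<bullet> e3 t = 1 \<and>
                 n t \<bullet> e2 t = 0 \<and> n t \<bullet> e3 t = 0 \<and> e2 t \<bullet> e3 t = 0" if "t \<in> I" for t
    using nn[OF that] e2e2[OF that] e3p[OF that] ne2[OF that] by (simp add: inner_commute)
  note F = frame_gen[OF sn e2(3) se3 on]
  define x1 where "x1 t = k t \<bullet> n t" for t
  define x2 where "x2 t = n' t \<bullet> e2 t" for t
  define x3 where "x3 t = n' t \<bullet> e3 t" for t
  have sx: "sm I x1" "sm I x2" "sm I x3"
    unfolding x1_def[abs_def] x2_def[abs_def] x3_def[abs_def]
    by (intro sm_inner sk sn sn' e2(3) se3)+
  have X: "Xg n e2 e3 t = typeD_matrix (x1 t) (x2 t) (x3 t)" if t: "t \<in> I" for t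
  proof -
    have vn: "vector_derivative n (at t) = n' t" by (simp add: n'_def)
    have ve2: "vector_derivative e2 (at t) = - (n' t \<bullet> e2 t) *\<^sub>R n t"
      using de2[OF t] by (rule vector_derivative_at)
    have de3: "(e3 has_vector_derivative vector_derivative e3 (at t)) (at t)"
      using sm_deriv(1)[OF oI se3] t by blast
    have f1: "k t \<bullet> e2 t = 0" "k t \<bullet> e3 t = 0" "e2 t \<bullet> k t = 0" "e3 t \<bullet> k t = 0"
      using kn[OF t] ne2[OF t] e3p(2)[OF t] e2n[OF t]
      by (metis inner_commute inner_scaleR_left mult_zero_right)+
    have f2: "n t \<bullet> k t = k t \<bullet> n t" by (rule inner_commute)
    have f3: "vector_derivative e2 (at t) \<bullet> n t = - (n' t \<bullet> e2 t)"
      using nn[OF t] by (simp add: ve2)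
    have f4: "vector_derivative e2 (at t) \<bullet> e3 t = 0"
      using e3p(2)[OF t] by (simp add: ve2 inner_commute)
    have f5: "vector_derivative e3 (at t) \<bullet> n t = - (n' t \<bullet> e3 t)"
      using inner_const_deriv[OF oI t de3 dn[OF t], of 0] e3p(2) by (simp add: inner_commute eq_neg_iff_add_eq_0)
    have f6: "vector_derivative e3 (at t) \<bullet> e2 t = 0"
      using inner_const_deriv[OF oI t de3 de2[OF t], of 0] e3p(3) e3p(2)[OF t]
      by (simp add: inner_commute)
    show ?thesis
      unfolding Xg_def typeD_matrix_def x1_def x2_def x3_def
      by (simp only: f1 f2 f3 f4 f5 f6 vn neg_0_equal_iff_equal minus_zero)
  qed
  show ?thesis
    by (rule exI, rule frame_typeI[OF F sx oI X])
qed

end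

context crv
begin

lemma typeC: "\<exists>Z. frame_of_type typeC_matrix I \<gamma> Z"
proof -
  obtain u where u: "u \<bullet> u = 1" "\<forall>t\<in>I. \<forall>\<mu>. k t \<noteq> \<mu> *\<^sub>R u"
    using avoid[OF oI neI kdiff k_nz] by blast
  define w where "w t = k t - (k t \<bullet> u) *\<^sub>R u" for t
  have wnz: "w t \<noteq> 0" if "t \<in> I" for t
    using u(2) that by (auto simp: w_def)
  have sw: "sm I w" unfolding w_def[abs_def]
    by (intro sm_diff sm_scaleR sm_inner sk sm_const)
  define e1 where "e1 t = inverse (norm (w t)) *\<^sub>R w t" for t
  have se1: "sm I e1" unfolding e1_def[abs_def]
    by (intro sm_scaleR sm_norm_inv[OF oI sw wnz] sw)
  have e1e1: "e1 t \<bullet> e1 t = 1" if "t \<in> I" for t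
    using wnz[OF that] by (simp add: e1_def power2_norm_eq_inner[symmetric] power2_eq_square)
  have wu: "w t \<bullet> u = 0" for t using u(1) by (simp add: w_def inner_diff_left)
  have e1u: "e1 t \<bullet> u = 0" for t using wu by (simp add: e1_def)
  have ue1: "u \<bullet> e1 t = 0" for t using e1u by (simp add: inner_commute)
  have kw: "k t = norm (w t) *\<^sub>R e1 t + (k t \<bullet> u) *\<^sub>R u" if "t \<in> I" for t
    using wnz[OF that] by (simp add: e1_def w_def)
  define e3 where "e3 t = cross3 u (e1 t)" for t
  have e3p: "e3 t \<bullet> e3 t = 1" "e3 t \<bullet> u = 0" "e3 t \<bullet> e1 t = 0" if "t \<in> I" for t
    using cross_unit[OF u(1) e1e1[OF that] ue1] by (simp_all add: e3_def)
  have se3: "sm I e3" unfolding e3_def[abs_def] by (rule sm_bilinear[OF bb_cross sm_const se1])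
  have on: "e1 t \<bullet> e1 t = 1 \<and> u \<bullet> u = 1 \<and> e3 t \<bullet> e3 t = 1 \<and>
                 e1 t \<bullet> u = 0 \<and> e1 t \<bullet> e3 t = 0 \<and> u \<bullet> e3 t = 0" if "t \<in> I" for t
    using e1e1[OF that] u(1) e3p[OF that] e1u by (simp add: inner_commute)
  note F = frame_gen[of e1 "\<lambda>t. u" e3, OF se1 sm_const se3 on]
  define x1 where "x1 t = k t \<bullet> e1 t" for t
  define x2 where "x2 t = k t \<bullet> u" for t
  define x3 where "x3 t = vector_derivative e1 (at t) \<bullet> e3 t" for t
  have se1': "sm I (\<lambda>t. vector_derivative e1 (at t))" by (rule sm_deriv(2)[OF oI se1])
  have sx: "sm I x1" "sm I x2" "sm I x3"
    unfolding x1_def[abs_def] x2_def[abs_def] x3_def[abs_def]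
    by (intro sm_inner sk se1 sm_const se1' se3)+
  have X: "Xg e1 (\<lambda>t. u) e3 t = typeC_matrix (x1 t) (x2 t) (x3 t)" if t: "t \<in> I" for t
  proof -
    have de1: "(e1 has_vector_derivative vector_derivative e1 (at t)) (at t)"
      using sm_deriv(1)[OF oI se1] t by blast
    have de3: "(e3 has_vector_derivative vector_derivative e3 (at t)) (at t)"
      using sm_deriv(1)[OF oI se3] t by blast
    have du: "((\<lambda>t. u) has_vector_derivative 0) (at t)" by simp
    have gen: "x \<bullet> c = 0" if "x = \<alpha> *\<^sub>R a + \<beta> *\<^sub>R b" "a \<bullet> c = 0" "b \<bullet> c = 0" for x a b c :: "real^3" and \<alpha> \<beta>
      using that by (simp add: inner_add_left)
    have e13: "e1 t \<bullet> e3 t = 0" "u \<bullet> e3 t = 0" using e3p(2,3)[OF t] by (simp_all add: inner_commute)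
    have f1a: "k t \<bullet> e3 t = 0" by (rule gen[OF kw[OF t] e13])
    then have f1: "k t \<bullet> e3 t = 0" "e3 t \<bullet> k t = 0" by (simp_all add: inner_commute)
    have f2: "e1 t \<bullet> k t = k t \<bullet> e1 t" "u \<bullet> k t = k t \<bullet> u" by (rule inner_commute)+
    have f3: "vector_derivative e1 (at t) \<bullet> u = 0"
      using inner_const_deriv[OF oI t de1 du, of 0] e1u by simp
    have f4: "vector_derivative e3 (at t) \<bullet> e1 t = - (vector_derivative e1 (at t) \<bullet> e3 t)"
      using inner_const_deriv[OF oI t de3 de1, of 0] e3p(3) by (simp add: inner_commute eq_neg_iff_add_eq_0)
    have f5: "vector_derivative e3 (at t) \<bullet> u = 0"
      using inner_const_deriv[OF oI t de3 du, of 0] e3p(2) by simp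
    have f6: "vector_derivative (\<lambda>t. u) (at t) = 0" by simp
    show ?thesis
      unfolding Xg_def typeC_matrix_def x1_def x2_def x3_def
      by (simp only: f1 f2 f3 f4 f5 f6 inner_zero_left neg_0_equal_iff_equal minus_zero)
  qed
  show ?thesis
    by (rule exI, rule frame_typeI[OF F sx oI X])
qed

end

theorem theorem2:
  fixes I :: "real set" and \<gamma> :: "real \<Rightarrow> real^4"
  assumes "two_regular I \<gamma>"
  shows "(\<exists>Z. frame_of_type typeC_matrix I \<gamma> Z) \<and> (\<exists>Z. frame_of_type typeD_matrix I \<gamma> Z)"
proof -
  interpret crv I \<gamma> by (rule crv.intro[OF assms])
  show ?thesis using typeC typeD by blast
qed

end
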